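(* Let $\mathcal{B}=\{B_j:j\in\mathbb{N}_0\}$ be a correlation basis, let $X,Y$ be continuous random variables and, for $N\in\mathbb{N}$, let $P_N^B=(\rho^B_{jk}(X,Y))_{j,k\in\{1,\dots,N\}}$. Then for every $N\in\mathbb{N}$ the matrices $I_N\pm(P_N^B+(P_N^B)^\top)/2$ are symmetric and positive semi-definite, where $I_N$ is the $N\times N$ identity. If moreover $(U,V)=(F_X(X),F_Y(Y))$ is exchangeable, i.e. $(U,V)\stackrel{d}{=}(V,U)$, then the matrices $I_N\pm P_N^B$ are positive semi-definite.
   Context: A correlation basis is a complete orthonormal system $\{B_j:j\in\mathbb{N}_0\}$ of $\mathcal{L}^2([0,1])$ (with respect to Lebesgue measure) with $B_0\equiv1$. For continuous $X,Y$ with distribution functions $F_X,F_Y$, the basis correlation of order $(j,k)$, $j,k\in\mathbb{N}$, is $\rho^B_{jk}(X,Y)=\rho(B_j(F_X(X)),B_k(F_Y(Y)))$, with $\rho$ Pearson correlation. *)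

theory Defs
  imports "HOL-Probability.Probability"
begin

definition correlation_basis :: "(nat \<Rightarrow> real \<Rightarrow> real) \<Rightarrow> bool" where
  "correlation_basis B \<longleftrightarrow>
     (\<forall>j. B j \<in> borel_measurable lborel \<and> set_integrable lborel {0..1} (\<lambda>x. (B j x)\<^sup>2)) \<and>
     (\<forall>j k. (LBINT x:{0..1}. B j x * B k x) = (if j = k then 1 else 0)) \<and>
     (\<forall>f. f \<in> borel_measurable lborel \<longrightarrow> set_integrable lborel {0..1} (\<lambda>x. (f x)\<^sup>2) \<longrightarrow>
          (\<forall>j. (LBINT x:{0..1}. f x * B j x) = 0) \<longrightarrow>
          (AE x in lborel. x \<in> {0..1} \<longrightarrow> f x = 0)) \<and>
     (\<forall>x. B 0 x = 1)"

definition pearson_corr :: "'a measure \<Rightarrow> ('a \<Rightarrow> real) \<Rightarrow> ('a \<Rightarrow> real) \<Rightarrow> real" where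
  "pearson_corr M A C =
     (integral\<^sup>L M (\<lambda>w. (A w - integral\<^sup>L M A) * (C w - integral\<^sup>L M C))) /
     sqrt ((integral\<^sup>L M (\<lambda>w. (A w - integral\<^sup>L M A)\<^sup>2)) * (integral\<^sup>L M (\<lambda>w. (C w - integral\<^sup>L M C)\<^sup>2)))"

definition distr_fun :: "'a measure \<Rightarrow> ('a \<Rightarrow> real) \<Rightarrow> real \<Rightarrow> real" where
  "distr_fun M X = cdf (distr M borel X)"

definition basis_corr :: "(nat \<Rightarrow> real \<Rightarrow> real) \<Rightarrow> 'a measure \<Rightarrow> ('a \<Rightarrow> real) \<Rightarrow> ('a \<Rightarrow> real) \<Rightarrow> nat \<Rightarrow> nat \<Rightarrow> real" where
  "basis_corr B M X Y j k =
     pearson_corr M (\<lambda>w. B j (distr_fun M X (X w))) (\<lambda>w. B k (distr_fun M Y (Y w)))"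

text \<open>N x N real matrices represented as nat \<Rightarrow> nat \<Rightarrow> real, indices in {1..N}.\<close>
definition mat_symmetric :: "nat \<Rightarrow> (nat \<Rightarrow> nat \<Rightarrow> real) \<Rightarrow> bool" where
  "mat_symmetric N A \<longleftrightarrow> (\<forall>j\<in>{1..N}. \<forall>k\<in>{1..N}. A j k = A k j)"

definition mat_psd :: "nat \<Rightarrow> (nat \<Rightarrow> nat \<Rightarrow> real) \<Rightarrow> bool" where
  "mat_psd N A \<longleftrightarrow> mat_symmetric N A \<and>
     (\<forall>v :: nat \<Rightarrow> real. (\<Sum>j\<in>{1..N}. \<Sum>k\<in>{1..N}. v j * A j k * v k) \<ge> 0)"

definition id_mat :: "nat \<Rightarrow> nat \<Rightarrow> real" where
  "id_mat j k = (if j = k then 1 else 0)"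

end

theory Submission
  imports Defs
begin

lemma unif_cdf:
  fixes M :: "'a measure" and X :: "'a \<Rightarrow> real"
  assumes P: "prob_space M" and Xm: "X \<in> borel_measurable M"
    and C: "\<forall>x. isCont (distr_fun M X) x"
  shows "distributed M lborel (\<lambda>w. distr_fun M X (X w)) (\<lambda>x. indicator {0..1::real} x / measure lborel {0..1::real})"
proof -
  interpret prob_space M by fact
  define F where "F = distr_fun M X"
  have RD: "real_distribution (distr M borel X)" using Xm by simp
  have Fc: "continuous_on UNIV F" using C unfolding F_def by (simp add: continuous_at_imp_continuous_on)
  have Fm[measurable]: "F \<in> borel_measurable borel" using Fc by (simp add: borel_measurable_continuous_onI)
  have F01: "0 \<le> F x \<and> F x \<le> 1" for x unfolding F_def distr_fun_def
    using real_distribution.cdf_bounded_prob[OF RD] by (simp add: cdf_def)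
  have Fmono: "x \<le> y \<Longrightarrow> F x \<le> F y" for x y unfolding F_def distr_fun_def
    using finite_borel_measure.cdf_nondecreasing[OF real_distribution.finite_borel_measure_M[OF RD]] .
  have Fbot: "(F \<longlongrightarrow> 0) at_bot" unfolding F_def distr_fun_def
    using finite_borel_measure.cdf_lim_at_bot[OF real_distribution.finite_borel_measure_M[OF RD]] .
  have Ftop: "(F \<longlongrightarrow> 1) at_top" unfolding F_def distr_fun_def
    using real_distribution.cdf_lim_at_top_prob[OF RD] .
  have FX: "emeasure M {w\<in>space M. X w \<le> c} = F c" for c
  proof -
    have "F c = measure (distr M borel X) {..c}" unfolding F_def distr_fun_def cdf_def by simp
    also have "\<dots> = measure M (X -` {..c} \<inter> space M)" using Xm by (simp add: measure_distr)
    finally show ?thesis by (simp add: emeasure_eq_measure vimage_def Int_def conj_commute)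
  qed
  have key: "emeasure M {w\<in>space M. F (X w) \<le> a} = emeasure lborel ({0..1} \<inter> {..a}) / 1" for a
  proof (cases "a < 0")
    case True
    then have e1: "{w\<in>space M. F (X w) \<le> a} = {}" using F01 by (smt (verit) Collect_empty_eq)
    have e2: "{0..1} \<inter> {..a} = ({}::real set)" using True by auto
    show ?thesis unfolding e1 e2 by simp
  next
    case False
    show ?thesis
    proof (cases "a \<ge> 1")
      case True
      have "\<And>w. F (X w) \<le> a" using F01 True by (meson order.trans)
      then have "{w\<in>space M. F (X w) \<le> a} = space M" by auto
      moreover have "{0..1} \<inter> {..a} = ({0..1}::real set)" using True by auto
      ultimately show ?thesis by (simp add: emeasure_space_1)
    next
      case a1: False
      have rhs: "emeasure lborel ({0..1} \<inter> {..a}) / 1 = ennreal a"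
      proof -
        have "{0..1} \<inter> {..a} = {0..a}" using a1 by auto
        then show ?thesis using False by (simp add: divide_ennreal_def)
      qed
      define S where "S = {x. F x \<le> a}"
      obtain x0 where x0: "\<And>x. x \<ge> x0 \<Longrightarrow> F x > a"
        using order_tendstoD(1)[OF Ftop, of a] a1 by (auto simp: eventually_at_top_linorder)
      have Sb: "S \<subseteq> {..x0}" unfolding S_def using x0 by (auto simp: not_le) (meson linorder_not_le order_less_le x0)
      have Scl: "closed S" unfolding S_def using Fc by (intro closed_Collect_le) (auto intro: continuous_intros)
      show ?thesis
      proof (cases "S = {}")
        case True
        have "a = 0"
        proof (rule ccontr)
          assume "a \<noteq> 0" then have "a > 0" using False by simp
          then obtain x1 where "\<And>x. x \<le> x1 \<Longrightarrow> F x < a"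
            using order_tendstoD(2)[OF Fbot, of a] by (auto simp: eventually_at_bot_linorder)
          then have "x1 \<in> S" unfolding S_def by force
          then show False using True by simp
        qed
        moreover have e: "{w\<in>space M. F (X w) \<le> a} = {}" using True unfolding S_def by auto
        ultimately show ?thesis using rhs unfolding e by simp
      next
        case ne: False
        define c where "c = Sup S"
        have bdd: "bdd_above S" using Sb by (meson bdd_above_Iic bdd_above_mono)
        have cS: "c \<in> S" unfolding c_def using closed_contains_Sup[OF ne bdd Scl] .
        have Seq: "S = {..c}"
        proof safe
          fix x assume "x \<in> S" then show "x \<le> c" unfolding c_def using bdd by (simp add: cSup_upper)
        next
          fix x assume "x \<le> c" then show "x \<in> S" using cS Fmono unfolding S_def by (meson mem_Collect_eq order.trans)
        qed
        have cx0: "c \<le> x0" using cS Sb by auto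
        have "F c \<le> a" using cS unfolding S_def by simp
        moreover have "a \<le> F x0" using x0[of x0] by simp
        ultimately obtain y where y: "c \<le> y" "y \<le> x0" "F y = a"
          using IVT'[of F c a x0] cx0 Fc by (meson continuous_on_subset subset_UNIV)
        then have "y \<in> S" unfolding S_def by simp
        then have "y = c" using y Seq by auto
        then have Fca: "F c = a" using y by simp
        have "{w\<in>space M. F (X w) \<le> a} = {w\<in>space M. X w \<le> c}"
          using Seq unfolding S_def by auto
        then show ?thesis using FX[of c] Fca rhs by simp
      qed
    qed
  qed
  show ?thesis unfolding F_def[symmetric]
    by (rule uniform_distrI_borel[where r=1]) (use key in \<open>auto simp: measurable_compose[OF Xm Fm]\<close>)
qed

lemma unif_int:
  fixes M :: "'a measure" and X :: "'a \<Rightarrow> real" and g :: "real \<Rightarrow> real"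
  assumes P: "prob_space M" and Xm: "X \<in> borel_measurable M"
    and C: "\<forall>x. isCont (distr_fun M X) x"
    and gm: "g \<in> borel_measurable borel" and gi: "set_integrable lborel {0..1} g"
  shows "integrable M (\<lambda>w. g (distr_fun M X (X w))) \<and>
         integral\<^sup>L M (\<lambda>w. g (distr_fun M X (X w))) = (LBINT x:{0..1}. g x)"
proof -
  have D: "distributed M lborel (\<lambda>w. distr_fun M X (X w)) (\<lambda>x. ennreal (indicator {0..1::real} x))"
    using unif_cdf[OF P Xm C] by simp
  have gm': "g \<in> borel_measurable lborel" using gm by simp
  have e: "(\<lambda>x. indicator {0..1::real} x * g x) = (\<lambda>x. indicator {0..1} x *\<^sub>R g x)" by simp
  show ?thesis
    using distributed_integrable[OF D gm'] distributed_integral[OF D gm'] gi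
    unfolding set_integrable_def set_lebesgue_integral_def e by simp
qed

lemma abs_prod_sq: "\<bar>(a::real) * b\<bar> \<le> a\<^sup>2 + b\<^sup>2"
proof -
  have "0 \<le> (\<bar>a\<bar> - \<bar>b\<bar>)\<^sup>2" by simp
  then have "2 * (\<bar>a\<bar> * \<bar>b\<bar>) \<le> a\<^sup>2 + b\<^sup>2" by (simp add: power2_eq_square algebra_simps)
  moreover have "0 \<le> \<bar>a\<bar> * \<bar>b\<bar>" by simp
  ultimately show ?thesis unfolding abs_mult by linarith
qed

lemma int_prod_sq:
  fixes f g :: "'b \<Rightarrow> real"
  assumes [measurable]: "f \<in> borel_measurable N" "g \<in> borel_measurable N"
    and "integrable N (\<lambda>x. (f x)\<^sup>2)" "integrable N (\<lambda>x. (g x)\<^sup>2)"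
  shows "integrable N (\<lambda>x. f x * g x)"
proof (rule Bochner_Integration.integrable_bound[of N "\<lambda>x. (f x)\<^sup>2 + (g x)\<^sup>2"])
  show "integrable N (\<lambda>x. (f x)\<^sup>2 + (g x)\<^sup>2)" using assms by simp
  show "(\<lambda>x. f x * g x) \<in> borel_measurable N" by measurable
  show "AE x in N. norm (f x * g x) \<le> norm ((f x)\<^sup>2 + (g x)\<^sup>2)"
  proof (rule AE_I2)
    fix x
    have "\<bar>f x * g x\<bar> \<le> (f x)\<^sup>2 + (g x)\<^sup>2" by (rule abs_prod_sq)
    then show "norm (f x * g x) \<le> norm ((f x)\<^sup>2 + (g x)\<^sup>2)" by simp
  qed
qed

lemma basis_prod:
  assumes "correlation_basis B"
  shows "set_integrable lborel {0..1} (\<lambda>x. B j x * B k x)"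
proof -
  have m: "B i \<in> borel_measurable lborel" and s: "set_integrable lborel {0..1} (\<lambda>x. (B i x)\<^sup>2)" for i
    using assms unfolding correlation_basis_def by auto
  have "integrable lborel (\<lambda>x. (indicator {0..1} x * B j x) * (indicator {0..1} x * B k x))"
  proof (rule int_prod_sq)
    show "(\<lambda>x. indicator {0..1} x * B j x) \<in> borel_measurable lborel" using m[of j] by measurable
    show "(\<lambda>x. indicator {0..1} x * B k x) \<in> borel_measurable lborel" using m[of k] by measurable
    have "(\<lambda>x. (indicator {0..1} x * B i x)\<^sup>2) = (\<lambda>x. indicator {0..1::real} x *\<^sub>R (B i x)\<^sup>2)" for i
      by (auto simp: indicator_def fun_eq_iff)
    then show "integrable lborel (\<lambda>x. (indicator {0..1} x * B j x)\<^sup>2)"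
      "integrable lborel (\<lambda>x. (indicator {0..1} x * B k x)\<^sup>2)"
      using s unfolding set_integrable_def by simp_all
  qed
  moreover have "(\<lambda>x. (indicator {0..1} x * B j x) * (indicator {0..1} x * B k x)) =
     (\<lambda>x. indicator {0..1::real} x *\<^sub>R (B j x * B k x))"
    by (auto simp: indicator_def fun_eq_iff)
  ultimately show ?thesis unfolding set_integrable_def by simp
qed

lemma orth_transfer:
  fixes M :: "'a measure" and X :: "'a \<Rightarrow> real"
  assumes P: "prob_space M" and Xm: "X \<in> borel_measurable M"
    and C: "\<forall>x. isCont (distr_fun M X) x" and CB: "correlation_basis B"
  shows "integrable M (\<lambda>w. B j (distr_fun M X (X w)) * B k (distr_fun M X (X w))) \<and>
         integral\<^sup>L M (\<lambda>w. B j (distr_fun M X (X w)) * B k (distr_fun M X (X w))) = id_mat j k"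
proof -
  have m: "B i \<in> borel_measurable borel" for i
    using CB unfolding correlation_basis_def by auto
  have gm: "(\<lambda>x. B j x * B k x) \<in> borel_measurable borel" using m[of j] m[of k] by measurable
  have o: "(LBINT x:{0..1}. B j x * B k x) = id_mat j k"
    using CB unfolding correlation_basis_def id_mat_def by auto
  show ?thesis using unif_int[OF P Xm C gm basis_prod[OF CB]] o by simp
qed

lemma gram_nonneg:
  fixes D :: "nat \<Rightarrow> 'b \<Rightarrow> real"
  assumes "finite I" "\<And>j k. j \<in> I \<Longrightarrow> k \<in> I \<Longrightarrow> integrable N (\<lambda>w. D j w * D k w)"
  shows "0 \<le> (\<Sum>j\<in>I. \<Sum>k\<in>I. v j * integral\<^sup>L N (\<lambda>w. D j w * D k w) * v k)"
proof -
  have "(\<Sum>j\<in>I. \<Sum>k\<in>I. v j * integral\<^sup>L N (\<lambda>w. D j w * D k w) * v k)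
      = (\<Sum>j\<in>I. \<Sum>k\<in>I. integral\<^sup>L N (\<lambda>w. (v j * D j w) * (v k * D k w)))"
    by (intro sum.cong refl) (simp add: algebra_simps)
  also have "\<dots> = (\<Sum>j\<in>I. integral\<^sup>L N (\<lambda>w. \<Sum>k\<in>I. (v j * D j w) * (v k * D k w)))"
    using assms by (intro sum.cong refl Bochner_Integration.integral_sum[symmetric])
      (simp add: mult.assoc mult.left_commute)
  also have "\<dots> = integral\<^sup>L N (\<lambda>w. \<Sum>j\<in>I. \<Sum>k\<in>I. (v j * D j w) * (v k * D k w))"
    using assms by (intro Bochner_Integration.integral_sum[symmetric] Bochner_Integration.integrable_sum)
      (simp add: mult.assoc mult.left_commute)
  also have "\<dots> = integral\<^sup>L N (\<lambda>w. (\<Sum>j\<in>I. v j * D j w)\<^sup>2)"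
    by (simp add: power2_eq_square sum_product)
  also have "\<dots> \<ge> 0" by simp
  finally show ?thesis .
qed


theorem proposition2:
  fixes M :: "'a measure" and X Y :: "'a \<Rightarrow> real" and B :: "nat \<Rightarrow> real \<Rightarrow> real"
  assumes "prob_space M"
    and "correlation_basis B"
    and "X \<in> borel_measurable M" and "Y \<in> borel_measurable M"
    and "\<forall>x. isCont (distr_fun M X) x" and "\<forall>x. isCont (distr_fun M Y) x"
  defines "P \<equiv> basis_corr B M X Y"
  shows "(\<forall>N\<ge>1.
           mat_symmetric N (\<lambda>j k. id_mat j k + (P j k + P k j) / 2) \<and>
           mat_psd N (\<lambda>j k. id_mat j k + (P j k + P k j) / 2) \<and>
           mat_symmetric N (\<lambda>j k. id_mat j k - (P j k + P k j) / 2) \<and>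
           mat_psd N (\<lambda>j k. id_mat j k - (P j k + P k j) / 2)) \<and>
         (distr M borel (\<lambda>w. (distr_fun M X (X w), distr_fun M Y (Y w))) =
         distr M borel (\<lambda>w. (distr_fun M Y (Y w), distr_fun M X (X w))) \<longrightarrow>
         (\<forall>N\<ge>1. mat_psd N (\<lambda>j k. id_mat j k + P j k) \<and> mat_psd N (\<lambda>j k. id_mat j k - P j k)))"
proof -
  note PS = assms(1) and CB = assms(2) and Xm = assms(3) and Ym = assms(4)
    and CX = assms(5) and CY = assms(6)
  interpret prob_space M by fact
  define A where "A = (\<lambda>j w. B j (distr_fun M X (X w)))"
  define C where "C = (\<lambda>j w. B j (distr_fun M Y (Y w)))"
  have Bm[measurable]: "B i \<in> borel_measurable borel" for i
    using CB unfolding correlation_basis_def by auto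
  have FXm[measurable]: "distr_fun M X \<in> borel_measurable borel"
    using CX by (intro borel_measurable_continuous_onI) (simp add: continuous_at_imp_continuous_on)
  have FYm[measurable]: "distr_fun M Y \<in> borel_measurable borel"
    using CY by (intro borel_measurable_continuous_onI) (simp add: continuous_at_imp_continuous_on)
  have Xm'[measurable]: "X \<in> borel_measurable M" and Ym'[measurable]: "Y \<in> borel_measurable M"
    using Xm Ym by auto
  have Am[measurable]: "A j \<in> borel_measurable M" for j unfolding A_def by measurable
  have Cm[measurable]: "C j \<in> borel_measurable M" for j unfolding C_def by measurable
  have AAi: "integrable M (\<lambda>w. A j w * A k w)" and AA: "integral\<^sup>L M (\<lambda>w. A j w * A k w) = id_mat j k" for j k
    using orth_transfer[OF PS Xm CX CB, of j k] unfolding A_def by auto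
  have CCi: "integrable M (\<lambda>w. C j w * C k w)" and CC: "integral\<^sup>L M (\<lambda>w. C j w * C k w) = id_mat j k" for j k
    using orth_transfer[OF PS Ym CY CB, of j k] unfolding C_def by auto
  have Asq: "integrable M (\<lambda>w. (A j w)\<^sup>2)" for j using AAi[of j j] by (simp add: power2_eq_square)
  have Csq: "integrable M (\<lambda>w. (C j w)\<^sup>2)" for j using CCi[of j j] by (simp add: power2_eq_square)
  have ACi: "integrable M (\<lambda>w. A j w * C k w)" for j k by (rule int_prod_sq) (auto simp: Asq Csq)
  have CAi: "integrable M (\<lambda>w. C j w * A k w)" for j k by (rule int_prod_sq) (auto simp: Asq Csq)
  have B0: "B 0 x = 1" for x using CB unfolding correlation_basis_def by auto
  have meanA: "integral\<^sup>L M (A j) = 0" if "j \<ge> 1" for j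
  proof -
    have "A j = (\<lambda>w. A j w * A 0 w)" unfolding A_def by (simp add: B0)
    then show ?thesis using AA[of j 0] that by (simp add: id_mat_def)
  qed
  have meanC: "integral\<^sup>L M (C j) = 0" if "j \<ge> 1" for j
  proof -
    have "C j = (\<lambda>w. C j w * C 0 w)" unfolding C_def by (simp add: B0)
    then show ?thesis using CC[of j 0] that by (simp add: id_mat_def)
  qed
  have PE: "P j k = integral\<^sup>L M (\<lambda>w. A j w * C k w)" if "j \<ge> 1" "k \<ge> 1" for j k
  proof -
    have "P j k = pearson_corr M (A j) (C k)" unfolding P_def basis_corr_def A_def C_def by simp
    also have "\<dots> = integral\<^sup>L M (\<lambda>w. A j w * C k w)"
      unfolding pearson_corr_def using meanA[OF that(1)] meanC[OF that(2)] AA[of j j] CC[of k k]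
      by (simp add: power2_eq_square id_mat_def)
    finally show ?thesis .
  qed
  have quad: "0 \<le> (\<Sum>j\<in>{1..N}. \<Sum>k\<in>{1..N}. v j * (id_mat j k + s * (P j k + P k j) / 2) * v k)"
    if s2: "s * s = 1" for N v and s :: real
  proof -
    define D where "D = (\<lambda>j w. A j w + s * C j w)"
    have De: "(\<lambda>w. D j w * D k w) = (\<lambda>w. A j w * A k w + s * (A j w * C k w) + s * (C j w * A k w) + (s * s) * (C j w * C k w))" for j k
      unfolding D_def by (simp add: fun_eq_iff algebra_simps)
    have Di: "integrable M (\<lambda>w. D j w * D k w)" for j k
      unfolding De using AAi ACi CAi CCi by simp
    have Dint: "integral\<^sup>L M (\<lambda>w. D j w * D k w) = 2 * (id_mat j k + s * (P j k + P k j) / 2)"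
      if "j \<in> {1..N}" "k \<in> {1..N}" for j k
    proof -
      have "integral\<^sup>L M (\<lambda>w. D j w * D k w) = id_mat j k + s * P j k + s * integral\<^sup>L M (\<lambda>w. C j w * A k w) + id_mat j k"
        unfolding De using AAi ACi CAi CCi AA CC PE that s2 by simp
      also have "integral\<^sup>L M (\<lambda>w. C j w * A k w) = P k j" using PE[of k j] that by (simp add: mult.commute)
      finally show ?thesis by (simp add: algebra_simps)
    qed
    have "0 \<le> (\<Sum>j\<in>{1..N}. \<Sum>k\<in>{1..N}. v j * integral\<^sup>L M (\<lambda>w. D j w * D k w) * v k)"
      by (rule gram_nonneg) (auto simp: Di)
    also have "\<dots> = 2 * (\<Sum>j\<in>{1..N}. \<Sum>k\<in>{1..N}. v j * (id_mat j k + s * (P j k + P k j) / 2) * v k)"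
    proof -
      have "(\<Sum>j\<in>{1..N}. \<Sum>k\<in>{1..N}. v j * integral\<^sup>L M (\<lambda>w. D j w * D k w) * v k) =
          (\<Sum>j\<in>{1..N}. \<Sum>k\<in>{1..N}. 2 * (v j * (id_mat j k + s * (P j k + P k j) / 2) * v k))"
        by (intro sum.cong refl) (simp add: Dint)
      then show ?thesis by (simp add: sum_distrib_left)
    qed
    finally show ?thesis by simp
  qed
  have part1: "mat_symmetric N (\<lambda>j k. id_mat j k + (P j k + P k j) / 2) \<and>
           mat_psd N (\<lambda>j k. id_mat j k + (P j k + P k j) / 2) \<and>
           mat_symmetric N (\<lambda>j k. id_mat j k - (P j k + P k j) / 2) \<and>
           mat_psd N (\<lambda>j k. id_mat j k - (P j k + P k j) / 2)" for N
  proof -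
    have sy1: "mat_symmetric N (\<lambda>j k. id_mat j k + (P j k + P k j) / 2)"
      and sy2: "mat_symmetric N (\<lambda>j k. id_mat j k - (P j k + P k j) / 2)"
      unfolding mat_symmetric_def id_mat_def by auto
    have q1: "0 \<le> (\<Sum>j\<in>{1..N}. \<Sum>k\<in>{1..N}. v j * (id_mat j k + (P j k + P k j) / 2) * v k)" for v
      using quad[of 1 v N] by simp
    have q2: "0 \<le> (\<Sum>j\<in>{1..N}. \<Sum>k\<in>{1..N}. v j * (id_mat j k - (P j k + P k j) / 2) * v k)" for v
    proof -
      have "(\<Sum>j\<in>{1..N}. \<Sum>k\<in>{1..N}. v j * (id_mat j k - (P j k + P k j) / 2) * v k) =
          (\<Sum>j\<in>{1..N}. \<Sum>k\<in>{1..N}. v j * (id_mat j k + (-1) * (P j k + P k j) / 2) * v k)"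
        by (intro sum.cong refl) (simp add: field_simps)
      then show ?thesis using quad[of "-1" v N] by simp
    qed
    show ?thesis using sy1 sy2 q1 q2 unfolding mat_psd_def by auto
  qed
  have part2: "mat_psd N (\<lambda>j k. id_mat j k + P j k) \<and> mat_psd N (\<lambda>j k. id_mat j k - P j k)"
    if ex: "distr M borel (\<lambda>w. (distr_fun M X (X w), distr_fun M Y (Y w))) =
         distr M borel (\<lambda>w. (distr_fun M Y (Y w), distr_fun M X (X w)))" for N
  proof -
    have Psym: "P j k = P k j" if "j \<ge> 1" "k \<ge> 1" for j k
    proof -
      have fst_m[measurable]: "fst \<in> borel_measurable (borel :: (real \<times> real) measure)"
        by (intro borel_measurable_continuous_onI continuous_intros)
      have snd_m[measurable]: "snd \<in> borel_measurable (borel :: (real \<times> real) measure)"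
        by (intro borel_measurable_continuous_onI continuous_intros)
      have gm: "(\<lambda>z::real \<times> real. B j (fst z) * B k (snd z)) \<in> borel_measurable borel" by measurable
      have T1: "(\<lambda>w. (distr_fun M X (X w), distr_fun M Y (Y w))) \<in> measurable M borel" by measurable
      have T2: "(\<lambda>w. (distr_fun M Y (Y w), distr_fun M X (X w))) \<in> measurable M borel" by measurable
      have "P j k = integral\<^sup>L M (\<lambda>w. A j w * C k w)" using PE that by simp
      also have "\<dots> = integral\<^sup>L (distr M borel (\<lambda>w. (distr_fun M X (X w), distr_fun M Y (Y w)))) (\<lambda>z. B j (fst z) * B k (snd z))"
        using integral_distr[OF T1 gm] unfolding A_def C_def by simp
      also have "\<dots> = integral\<^sup>L M (\<lambda>w. C j w * A k w)"
        unfolding ex using integral_distr[OF T2 gm] unfolding A_def C_def by simp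
      also have "\<dots> = P k j" using PE[of k j] that by (simp add: mult.commute)
      finally show ?thesis .
    qed
    have e1: "(\<Sum>j\<in>{1..N}. \<Sum>k\<in>{1..N}. v j * (id_mat j k + P j k) * v k) =
        (\<Sum>j\<in>{1..N}. \<Sum>k\<in>{1..N}. v j * (id_mat j k + (P j k + P k j) / 2) * v k)" for v
      by (intro sum.cong refl) (simp add: Psym)
    have e2: "(\<Sum>j\<in>{1..N}. \<Sum>k\<in>{1..N}. v j * (id_mat j k - P j k) * v k) =
        (\<Sum>j\<in>{1..N}. \<Sum>k\<in>{1..N}. v j * (id_mat j k - (P j k + P k j) / 2) * v k)" for v
      by (intro sum.cong refl) (simp add: Psym)
    have s1: "mat_symmetric N (\<lambda>j k. id_mat j k + P j k)" "mat_symmetric N (\<lambda>j k. id_mat j k - P j k)"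
      unfolding mat_symmetric_def id_mat_def using Psym by auto
    show ?thesis using part1[of N] s1 unfolding mat_psd_def e1 e2 by auto
  qed
  show ?thesis using part1 part2 by blast
qed

end
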